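(* Fix a prime $p$ and $n\in\mathbb{N}$. The assignment $(A\subseteq B)\mapsto G(A\subseteq B)$ from objects of $\mathcal{S}(\mathbb{Z}/p^n)$ to groups preserves indecomposability (if $(A\subseteq B)$ is an indecomposable object of $\mathcal{S}(\mathbb{Z}/p^n)$ then $G(A\subseteq B)$ is an indecomposable group, i.e. not a direct product of two nontrivial subgroups), and it preserves and reflects isomorphisms: $(A\subseteq B)\cong(A'\subseteq B')$ in $\mathcal{S}(\mathbb{Z}/p^n)$ if and only if $G(A\subseteq B)\cong G(A'\subseteq B')$ as groups.
   Context: $\mathcal{S}(\mathbb{Z}/p^n)$ is the category whose objects are pairs $(A\subseteq B)$ where $B$ is a finite abelian group with $p^nB=0$ and $A$ is a subgroup of $B$; a morphism $(A\subseteq B)\to(A'\subseteq B')$ is a group homomorphism $f\colon B\to B'$ with $f(A)\subseteq A'$. An object is indecomposable if it is nonzero and not isomorphic to a direct sum $(A_1\oplus A_2\subseteq B_1\oplus B_2)$ of two nonzero objects. For such an object with $A$ of exponent $p^m$ and inclusion $\iota\colon A\to B$, $G(A\subseteq B)$ is the set $A\oplus B\oplus \mathbb{Z}/p^m$ with group operation $(a,b,d)+(a',b',d')=(a+a',\,b+d\,\iota(a')+b',\,d+d')$. *)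

theory Defs
  imports "HOL-Algebra.Algebra"
begin

text \<open>Objects of S(Z/p^n): a finite abelian group B (HOL-Algebra, written
multiplicatively) with p^n-th powers trivial, and a subgroup A of B.\<close>
definition S_obj :: "nat \<Rightarrow> nat \<Rightarrow> 'a set \<Rightarrow> ('a, 'm) monoid_scheme \<Rightarrow> bool" where
  "S_obj p n A B \<longleftrightarrow> comm_group B \<and> finite (carrier B) \<and>
     (\<forall>x\<in>carrier B. x [^]\<^bsub>B\<^esub> (p ^ n) = \<one>\<^bsub>B\<^esub>) \<and> subgroup A B"

definition S_hom :: "'a set \<Rightarrow> ('a, 'm) monoid_scheme \<Rightarrow> 'b set \<Rightarrow> ('b, 'n) monoid_scheme
    \<Rightarrow> ('a \<Rightarrow> 'b) \<Rightarrow> bool" where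
  "S_hom A B A' B' f \<longleftrightarrow> f \<in> hom B B' \<and> f ` A \<subseteq> A'"

definition S_iso :: "'a set \<Rightarrow> ('a, 'm) monoid_scheme \<Rightarrow> 'b set \<Rightarrow> ('b, 'n) monoid_scheme
    \<Rightarrow> bool" where
  "S_iso A B A' B' \<longleftrightarrow> (\<exists>f g. S_hom A B A' B' f \<and> S_hom A' B' A B g \<and>
      (\<forall>x\<in>carrier B. g (f x) = x) \<and> (\<forall>y\<in>carrier B'. f (g y) = y))"

definition S_nonzero :: "('a, 'm) monoid_scheme \<Rightarrow> bool" where
  "S_nonzero B \<longleftrightarrow> carrier B \<noteq> {\<one>\<^bsub>B\<^esub>}"

text \<open>Indecomposable object: nonzero and not isomorphic to a direct sum
(A1 \<oplus> A2 \<subseteq> B1 \<oplus> B2) of two nonzero objects (summands taken over the same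
element type as B).\<close>
definition S_indecomposable :: "nat \<Rightarrow> nat \<Rightarrow> 'a set \<Rightarrow> ('a, 'm) monoid_scheme \<Rightarrow> bool" where
  "S_indecomposable p n A B \<longleftrightarrow> S_obj p n A B \<and> S_nonzero B \<and>
     \<not> (\<exists>(A1 :: 'a set) (B1 :: 'a monoid) (A2 :: 'a set) (B2 :: 'a monoid).
          S_obj p n A1 B1 \<and> S_obj p n A2 B2 \<and> S_nonzero B1 \<and> S_nonzero B2 \<and>
          S_iso A B (A1 \<times> A2) (B1 \<times>\<times> B2))"

definition sub_exp :: "nat \<Rightarrow> 'a set \<Rightarrow> ('a, 'm) monoid_scheme \<Rightarrow> nat" where
  "sub_exp p A B = (LEAST m. \<forall>a\<in>A. a [^]\<^bsub>B\<^esub> (p ^ m) = \<one>\<^bsub>B\<^esub>)"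

definition Gconstr :: "nat \<Rightarrow> 'a set \<Rightarrow> ('a, 'm) monoid_scheme \<Rightarrow> ('a \<times> 'a \<times> nat) monoid" where
  "Gconstr p A B =
     (let q = p ^ sub_exp p A B in
      \<lparr> carrier = A \<times> carrier B \<times> {0..<q},
        monoid.mult = (\<lambda>(a, b, d) (a', b', d').
           (a \<otimes>\<^bsub>B\<^esub> a', b \<otimes>\<^bsub>B\<^esub> (a' [^]\<^bsub>B\<^esub> d) \<otimes>\<^bsub>B\<^esub> b', (d + d') mod q)),
        one = (\<one>\<^bsub>B\<^esub>, \<one>\<^bsub>B\<^esub>, 0) \<rparr>)"

definition group_indecomposable :: "('a, 'm) monoid_scheme \<Rightarrow> bool" where
  "group_indecomposable G \<longleftrightarrow> carrier G \<noteq> {\<one>\<^bsub>G\<^esub>} \<and>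
     \<not> (\<exists>H K. H \<lhd> G \<and> K \<lhd> G \<and> H \<noteq> {\<one>\<^bsub>G\<^esub>} \<and> K \<noteq> {\<one>\<^bsub>G\<^esub>} \<and>
          H \<inter> K = {\<one>\<^bsub>G\<^esub>} \<and> H <#>\<^bsub>G\<^esub> K = carrier G)"

end

theory Submission imports Defs "HOL-Computational_Algebra.Primes" begin

lemma (in group) normal_disjoint_comm:
  assumes H: "H \<lhd> G" and K: "K \<lhd> G" and HK: "H \<inter> K = {\<one>}" and h: "h \<in> H" and k: "k \<in> K"
  shows "h \<otimes> k = k \<otimes> h"
proof -
  interpret H: normal H G by (rule H)
  interpret K: normal K G by (rule K)
  have hc: "h \<in> carrier G" using h H.subset by blast
  have kc: "k \<in> carrier G" using k K.subset by blast
  have c1: "h \<otimes> k \<otimes> inv h \<otimes> inv k \<in> K"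
    using K.inv_op_closed2[OF hc k] K.m_inv_closed[OF k] by (rule K.m_closed)
  have "k \<otimes> inv h \<otimes> inv k \<in> H" using H.inv_op_closed2[OF kc] h by simp
  then have c2: "h \<otimes> k \<otimes> inv h \<otimes> inv k \<in> H"
  proof -
    have "h \<otimes> k \<otimes> inv h \<otimes> inv k = h \<otimes> (k \<otimes> inv h \<otimes> inv k)" using hc kc by (simp add: m_assoc)
    then show ?thesis using H.m_closed[OF h \<open>k \<otimes> inv h \<otimes> inv k \<in> H\<close>] by simp
  qed
  have "h \<otimes> k \<otimes> inv h \<otimes> inv k = \<one>" using c1 c2 HK by blast
  then have "h \<otimes> k \<otimes> inv h = k" using hc kc by (simp add: inv_solve_right')
  then show ?thesis using hc kc by (simp add: inv_solve_right')
qed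

lemma (in group) set_mult_dec:
  assumes "H <#> K = carrier G" "g \<in> carrier G" shows "\<exists>h\<in>H. \<exists>k\<in>K. g = h \<otimes> k"
  using assms unfolding set_mult_def by blast

lemma (in group) central_factor:
  assumes UW: "U \<subseteq> carrier G" "W \<subseteq> carrier G"
    and comm: "\<forall>x\<in>U. \<forall>y\<in>W. x \<otimes> y = y \<otimes> x"
    and dec: "\<forall>g\<in>carrier G. \<exists>x\<in>U. \<exists>y\<in>W. g = x \<otimes> y"
    and x: "x \<in> U" and y: "y \<in> W"
    and cen: "\<forall>g\<in>carrier G. (x \<otimes> y) \<otimes> g = g \<otimes> (x \<otimes> y)"
  shows "\<forall>g\<in>carrier G. x \<otimes> g = g \<otimes> x"
proof
  fix g assume g: "g \<in> carrier G"
  obtain x' y' where x': "x' \<in> U" and y': "y' \<in> W" and gg: "g = x' \<otimes> y'" using dec g by blast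
  have xc: "x \<in> carrier G" "y \<in> carrier G" "x' \<in> carrier G" "y' \<in> carrier G" using UW x y x' y' by auto
  have "x \<otimes> y \<otimes> x' = x' \<otimes> (x \<otimes> y)" using cen xc by blast
  moreover have "y \<otimes> x' = x' \<otimes> y" using comm[rule_format, OF x' y] by (rule sym)
  then have "x \<otimes> y \<otimes> x' = x \<otimes> x' \<otimes> y" using xc by (simp add: m_assoc)
  moreover have "x' \<otimes> (x \<otimes> y) = x' \<otimes> x \<otimes> y" using xc by (simp add: m_assoc)
  ultimately have "x \<otimes> x' \<otimes> y = x' \<otimes> x \<otimes> y" by simp
  then have "x \<otimes> x' \<otimes> y \<otimes> inv y = x' \<otimes> x \<otimes> y \<otimes> inv y" by simp
  then have e: "x \<otimes> x' = x' \<otimes> x" using xc by (simp add: m_assoc)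
  have xy': "x \<otimes> y' = y' \<otimes> x" using comm[rule_format, OF x y'] .
  have "x \<otimes> g = x' \<otimes> x \<otimes> y'" using e xc by (simp add: gg m_assoc[symmetric])
  also have "\<dots> = x' \<otimes> (y' \<otimes> x)" using xc xy' by (simp add: m_assoc)
  also have "\<dots> = g \<otimes> x" using xc by (simp add: gg m_assoc)
  finally show "x \<otimes> g = g \<otimes> x" .
qed

lemma (in group) swap_mid:
  assumes "a \<in> carrier G" "b \<in> carrier G" "c \<in> carrier G" "d \<in> carrier G" "b \<otimes> c = c \<otimes> b"
  shows "a \<otimes> b \<otimes> (c \<otimes> d) = a \<otimes> c \<otimes> (b \<otimes> d)"
proof -
  have "a \<otimes> b \<otimes> (c \<otimes> d) = a \<otimes> (b \<otimes> c) \<otimes> d" using assms(1-4) by (simp add: m_assoc)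
  also have "\<dots> = a \<otimes> (c \<otimes> b) \<otimes> d" by (simp only: assms(5))
  also have "\<dots> = a \<otimes> c \<otimes> (b \<otimes> d)" using assms(1-4) by (simp add: m_assoc)
  finally show ?thesis .
qed

lemma (in group) grp_lcan:
  assumes "x \<in> carrier G" "y \<in> carrier G" "z \<in> carrier G" "x \<otimes> y = x \<otimes> z" shows "y = z"
proof -
  have "inv x \<otimes> (x \<otimes> y) = inv x \<otimes> (x \<otimes> z)" using assms(4) by simp
  then show ?thesis using assms(1-3) by (simp add: m_assoc[symmetric])
qed

lemma kill_transfer:
  assumes gB: "group B" and gB': "group B'" and g: "g \<in> hom B' B" and f: "f \<in> hom B B'"
    and fg: "\<forall>y\<in>carrier B'. f (g y) = y" and gA: "g ` A' \<subseteq> A" and A'c: "A' \<subseteq> carrier B'"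
    and k: "\<forall>a\<in>A. a [^]\<^bsub>B\<^esub> (k::nat) = \<one>\<^bsub>B\<^esub>"
  shows "\<forall>a\<in>A'. a [^]\<^bsub>B'\<^esub> k = \<one>\<^bsub>B'\<^esub>"
proof
  fix a assume a: "a \<in> A'"
  have ac: "a \<in> carrier B'" using a A'c by blast
  have pc: "a [^]\<^bsub>B'\<^esub> k \<in> carrier B'" using ac gB' by (simp add: group.is_monoid monoid.nat_pow_closed)
  have "g a \<in> A" using gA a by blast
  then have "(g a) [^]\<^bsub>B\<^esub> k = \<one>\<^bsub>B\<^esub>" using k by blast
  moreover have "g (a [^]\<^bsub>B'\<^esub> k) = (g a) [^]\<^bsub>B\<^esub> k" by (rule hom_nat_pow[OF g ac gB' gB])
  ultimately have "g (a [^]\<^bsub>B'\<^esub> k) = \<one>\<^bsub>B\<^esub>" by simp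
  then have "f (g (a [^]\<^bsub>B'\<^esub> k)) = f \<one>\<^bsub>B\<^esub>" by simp
  also have "\<dots> = \<one>\<^bsub>B'\<^esub>" by (rule hom_one[OF f gB gB'])
  finally show "a [^]\<^bsub>B'\<^esub> k = \<one>\<^bsub>B'\<^esub>" using fg pc by simp
qed

locale GS =
  fixes p n :: nat and A :: "'a set" and B :: "'a monoid"
  assumes obj: "S_obj p n A B" and pr: "Factorial_Ring.prime p"
begin

sublocale B: comm_group B using obj by (simp add: S_obj_def)

lemma Asub: "subgroup A B" using obj by (simp add: S_obj_def)
lemma A_car: "a \<in> A \<Longrightarrow> a \<in> carrier B" using Asub by (rule subgroup.mem_carrier)
lemma exp_n: "x \<in> carrier B \<Longrightarrow> x [^]\<^bsub>B\<^esub> (p ^ n) = \<one>\<^bsub>B\<^esub>" using obj unfolding S_obj_def by blast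
lemma finB: "finite (carrier B)" using obj unfolding S_obj_def by blast

definition "m = sub_exp p A B"
definition "q = p ^ m"

lemma m_kill: "a \<in> A \<Longrightarrow> a [^]\<^bsub>B\<^esub> q = \<one>\<^bsub>B\<^esub>"
proof -
  have "\<forall>a\<in>A. a [^]\<^bsub>B\<^esub> (p ^ m) = \<one>\<^bsub>B\<^esub>"
    unfolding m_def sub_exp_def by (rule LeastI[of _ n]) (use exp_n A_car in auto)
  then show "a \<in> A \<Longrightarrow> ?thesis" by (simp add: q_def)
qed

lemma q_pos: "q > 0" using pr by (simp add: q_def prime_gt_0_nat)

lemma exp_zero:
  assumes "d < q" "\<forall>a\<in>A. a [^]\<^bsub>B\<^esub> d = \<one>\<^bsub>B\<^esub>" shows "d = 0"
proof (rule ccontr)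
  assume d0: "d \<noteq> 0"
  define g where "g = gcd d (p ^ n)"
  have "g dvd p ^ n" by (simp add: g_def)
  then obtain j where j: "g = p ^ j" using divides_primepow_nat[OF pr] by blast
  have "\<forall>a\<in>A. a [^]\<^bsub>B\<^esub> g = \<one>\<^bsub>B\<^esub>"
  proof
    fix a assume a: "a \<in> A"
    have c: "a \<in> carrier B" using A_car a .
    have "B.ord a dvd d" using B.pow_eq_id[OF c] assms(2) a by blast
    moreover have "B.ord a dvd p ^ n" using B.pow_eq_id[OF c] exp_n[OF c] by blast
    ultimately have "B.ord a dvd g" by (simp add: g_def)
    then show "a [^]\<^bsub>B\<^esub> g = \<one>\<^bsub>B\<^esub>" using B.pow_eq_id[OF c] by blast
  qed
  then have "m \<le> j" unfolding m_def sub_exp_def using j by (auto intro: Least_le)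
  then have "p ^ m \<le> p ^ j" using pr by (intro power_increasing) (auto simp: prime_gt_0_nat Suc_le_eq)
  then have "q \<le> g" using j by (simp add: q_def)
  moreover have "g \<le> d" using d0 by (simp add: g_def gcd_le1_nat)
  ultimately show False using assms(1) by simp
qed

lemma pow_modq: "a \<in> A \<Longrightarrow> a [^]\<^bsub>B\<^esub> (k mod q) = a [^]\<^bsub>B\<^esub> k"
proof -
  assume a: "a \<in> A"
  have c: "a \<in> carrier B" using A_car a .
  have "a [^]\<^bsub>B\<^esub> k = a [^]\<^bsub>B\<^esub> (q * (k div q) + k mod q)" by simp
  also have "\<dots> = (a [^]\<^bsub>B\<^esub> q) [^]\<^bsub>B\<^esub> (k div q) \<otimes>\<^bsub>B\<^esub> a [^]\<^bsub>B\<^esub> (k mod q)"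
    using c by (simp only: B.nat_pow_mult[symmetric] B.nat_pow_pow)
  also have "\<dots> = a [^]\<^bsub>B\<^esub> (k mod q)" using m_kill[OF a] c by simp
  finally show ?thesis by simp
qed

definition "G = Gconstr p A B"

lemma carrier_G: "carrier G = A \<times> carrier B \<times> {0..<q}"
  by (simp add: G_def Gconstr_def q_def m_def Let_def)
lemma mult_G: "(a, b, d) \<otimes>\<^bsub>G\<^esub> (a', b', d') =
   (a \<otimes>\<^bsub>B\<^esub> a', b \<otimes>\<^bsub>B\<^esub> (a' [^]\<^bsub>B\<^esub> d) \<otimes>\<^bsub>B\<^esub> b', (d + d') mod q)"
  by (simp add: G_def Gconstr_def q_def m_def Let_def)
lemma one_G: "\<one>\<^bsub>G\<^esub> = (\<one>\<^bsub>B\<^esub>, \<one>\<^bsub>B\<^esub>, 0)"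
  by (simp add: G_def Gconstr_def q_def m_def Let_def)

lemma A_closed: "a \<in> A \<Longrightarrow> a' \<in> A \<Longrightarrow> a \<otimes>\<^bsub>B\<^esub> a' \<in> A"
  using Asub by (rule subgroup.m_closed)
lemma A_one: "\<one>\<^bsub>B\<^esub> \<in> A" using Asub by (rule subgroup.one_closed)
lemma A_inv: "a \<in> A \<Longrightarrow> inv\<^bsub>B\<^esub> a \<in> A" using Asub by (rule subgroup.m_inv_closed)

lemma group_G: "group G"
proof (rule groupI)
  show "x \<otimes>\<^bsub>G\<^esub> y \<in> carrier G" if "x \<in> carrier G" "y \<in> carrier G" for x y
    using that q_pos by (auto simp: carrier_G mult_G A_closed A_car)
  show "\<one>\<^bsub>G\<^esub> \<in> carrier G" using q_pos A_one by (simp add: carrier_G one_G)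
  show "\<one>\<^bsub>G\<^esub> \<otimes>\<^bsub>G\<^esub> x = x" if "x \<in> carrier G" for x
    using that by (auto simp: carrier_G mult_G one_G A_car)
  show "x \<otimes>\<^bsub>G\<^esub> y \<otimes>\<^bsub>G\<^esub> z = x \<otimes>\<^bsub>G\<^esub> (y \<otimes>\<^bsub>G\<^esub> z)"
    if "x \<in> carrier G" "y \<in> carrier G" "z \<in> carrier G" for x y z
  proof -
    obtain a b d a' b' d' a'' b'' d'' where xyz: "x = (a,b,d)" "y = (a',b',d')" "z = (a'',b'',d'')"
      by (cases x, cases y, cases z) auto
    have h: "a \<in> A" "b \<in> carrier B" "a' \<in> A" "b' \<in> carrier B" "a'' \<in> A" "b'' \<in> carrier B"
      using that xyz by (auto simp: carrier_G)
    have c: "a \<in> carrier B" "a' \<in> carrier B" "a'' \<in> carrier B" using h A_car by auto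
    have e1: "a'' [^]\<^bsub>B\<^esub> ((d + d') mod q) = a'' [^]\<^bsub>B\<^esub> d \<otimes>\<^bsub>B\<^esub> a'' [^]\<^bsub>B\<^esub> d'"
      using pow_modq[OF h(5)] c by (simp add: B.nat_pow_mult)
    have e2: "(a' \<otimes>\<^bsub>B\<^esub> a'') [^]\<^bsub>B\<^esub> d = a' [^]\<^bsub>B\<^esub> d \<otimes>\<^bsub>B\<^esub> a'' [^]\<^bsub>B\<^esub> d"
      using c by (simp add: B.pow_mult_distrib B.m_comm)
    have m3': "((d + d') mod q + d'') mod q = (d + (d' + d'') mod q) mod q" by (simp add: mod_add_left_eq mod_add_right_eq add.assoc)
    have "b \<otimes>\<^bsub>B\<^esub> a' [^]\<^bsub>B\<^esub> d \<otimes>\<^bsub>B\<^esub> b' \<otimes>\<^bsub>B\<^esub> (a'' [^]\<^bsub>B\<^esub> d \<otimes>\<^bsub>B\<^esub> a'' [^]\<^bsub>B\<^esub> d') \<otimes>\<^bsub>B\<^esub> b''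
        = b \<otimes>\<^bsub>B\<^esub> (a' [^]\<^bsub>B\<^esub> d \<otimes>\<^bsub>B\<^esub> a'' [^]\<^bsub>B\<^esub> d) \<otimes>\<^bsub>B\<^esub> (b' \<otimes>\<^bsub>B\<^esub> a'' [^]\<^bsub>B\<^esub> d' \<otimes>\<^bsub>B\<^esub> b'')"
      using h c by (simp add: B.m_ac)
    then show ?thesis using xyz e1 e2 m3' c by (simp add: mult_G B.m_assoc)
  qed
  show "\<exists>y\<in>carrier G. y \<otimes>\<^bsub>G\<^esub> x = \<one>\<^bsub>G\<^esub>" if "x \<in> carrier G" for x
  proof -
    obtain a b d where x: "x = (a,b,d)" by (cases x) auto
    have h: "a \<in> A" "b \<in> carrier B" "d < q" using that x by (auto simp: carrier_G)
    have c: "a \<in> carrier B" using h A_car by auto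
    define e where "e = (q - d) mod q"
    define c' where "c' = inv\<^bsub>B\<^esub> (a [^]\<^bsub>B\<^esub> e \<otimes>\<^bsub>B\<^esub> b)"
    have "(inv\<^bsub>B\<^esub> a, c', e) \<in> carrier G"
      using h c q_pos by (auto simp: carrier_G c'_def e_def A_inv)
    moreover have "(inv\<^bsub>B\<^esub> a, c', e) \<otimes>\<^bsub>G\<^esub> x = \<one>\<^bsub>G\<^esub>"
      using h c q_pos by (simp add: x mult_G one_G c'_def e_def B.m_assoc mod_add_left_eq)
    ultimately show ?thesis by blast
  qed
qed


sublocale G: group G by (rule group_G)

lemma in_G: "(a, b, d) \<in> carrier G \<longleftrightarrow> a \<in> A \<and> b \<in> carrier B \<and> d < q"
  by (simp add: carrier_G)

lemma lcan: "x \<in> carrier G \<Longrightarrow> y \<in> carrier G \<Longrightarrow> z \<in> carrier G \<Longrightarrow>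
  x \<otimes>\<^bsub>G\<^esub> y = x \<otimes>\<^bsub>G\<^esub> z \<Longrightarrow> y = z"
  by (metis G.Units_eq G.Units_l_cancel)

lemma rcan: "x \<in> carrier G \<Longrightarrow> y \<in> carrier G \<Longrightarrow> z \<in> carrier G \<Longrightarrow>
  y \<otimes>\<^bsub>G\<^esub> x = z \<otimes>\<^bsub>G\<^esub> x \<Longrightarrow> y = z"
  by (metis G.inv_solve_right' G.m_closed G.inv_closed G.r_inv G.r_one G.m_assoc)

lemma A_pow: "a \<in> A \<Longrightarrow> a [^]\<^bsub>B\<^esub> (k::nat) \<in> A"
  by (induct k) (auto simp: A_one A_closed)

definition "emb b = (\<one>\<^bsub>B\<^esub>, b, 0::nat)"

lemma emb_car: "b \<in> carrier B \<Longrightarrow> emb b \<in> carrier G"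
  using q_pos A_one by (simp add: emb_def in_G)

lemma emb_mult: "b \<in> carrier B \<Longrightarrow> b' \<in> carrier B \<Longrightarrow> emb b \<otimes>\<^bsub>G\<^esub> emb b' = emb (b \<otimes>\<^bsub>B\<^esub> b')"
  by (simp add: emb_def mult_G)

lemma emb_one: "emb \<one>\<^bsub>B\<^esub> = \<one>\<^bsub>G\<^esub>"
  by (simp add: emb_def one_G)

lemma emb_inj: "emb b = emb b' \<Longrightarrow> b = b'"
  by (simp add: emb_def)

lemma emb_central: "b \<in> carrier B \<Longrightarrow> g \<in> carrier G \<Longrightarrow> emb b \<otimes>\<^bsub>G\<^esub> g = g \<otimes>\<^bsub>G\<^esub> emb b"
  by (cases g) (auto simp: emb_def mult_G in_G A_car B.m_comm)

lemma comm_defect: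
  assumes "u \<in> carrier G" "v \<in> carrier G"
  shows "\<exists>c\<in>A. v \<otimes>\<^bsub>G\<^esub> u = u \<otimes>\<^bsub>G\<^esub> v \<otimes>\<^bsub>G\<^esub> emb c"
proof -
  obtain a b d a' b' d' where uv: "u = (a,b,d)" "v = (a',b',d')" by (cases u, cases v) auto
  have h: "a \<in> A" "b \<in> carrier B" "a' \<in> A" "b' \<in> carrier B" "d < q" "d' < q"
    using assms uv by (auto simp: in_G)
  have c: "a \<in> carrier B" "a' \<in> carrier B" using h A_car by auto
  define c0 where "c0 = inv\<^bsub>B\<^esub> (a' [^]\<^bsub>B\<^esub> d) \<otimes>\<^bsub>B\<^esub> a [^]\<^bsub>B\<^esub> d'"
  have c0A: "c0 \<in> A" using h by (simp add: c0_def A_closed A_inv A_pow)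
  have "b' \<otimes>\<^bsub>B\<^esub> a [^]\<^bsub>B\<^esub> d' \<otimes>\<^bsub>B\<^esub> b = b \<otimes>\<^bsub>B\<^esub> a' [^]\<^bsub>B\<^esub> d \<otimes>\<^bsub>B\<^esub> b' \<otimes>\<^bsub>B\<^esub> \<one>\<^bsub>B\<^esub> \<otimes>\<^bsub>B\<^esub> c0"
  proof -
    have "a' [^]\<^bsub>B\<^esub> d \<otimes>\<^bsub>B\<^esub> c0 = a [^]\<^bsub>B\<^esub> d'"
      using c by (simp add: c0_def B.m_assoc[symmetric])
    note eq = this
    have c0c: "c0 \<in> carrier B" using c0A A_car by auto
    have "b \<otimes>\<^bsub>B\<^esub> a' [^]\<^bsub>B\<^esub> d \<otimes>\<^bsub>B\<^esub> b' \<otimes>\<^bsub>B\<^esub> \<one>\<^bsub>B\<^esub> \<otimes>\<^bsub>B\<^esub> c0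
       = b \<otimes>\<^bsub>B\<^esub> b' \<otimes>\<^bsub>B\<^esub> (a' [^]\<^bsub>B\<^esub> d \<otimes>\<^bsub>B\<^esub> c0)"
      using c h c0c by (simp add: B.m_ac)
    also have "\<dots> = b \<otimes>\<^bsub>B\<^esub> b' \<otimes>\<^bsub>B\<^esub> a [^]\<^bsub>B\<^esub> d'" using eq by simp
    also have "\<dots> = b' \<otimes>\<^bsub>B\<^esub> a [^]\<^bsub>B\<^esub> d' \<otimes>\<^bsub>B\<^esub> b" using c h by (simp add: B.m_ac)
    finally show ?thesis by simp
  qed
  then show ?thesis using c0A h c
    by (intro bexI[of _ c0]) (simp_all add: uv emb_def mult_G B.m_comm[of a' a] add.commute[of d' d])
qed

lemma center_char:
  assumes g: "g \<in> carrier G" and cen: "\<forall>h\<in>carrier G. g \<otimes>\<^bsub>G\<^esub> h = h \<otimes>\<^bsub>G\<^esub> g"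
  shows "\<exists>b\<in>carrier B. g = emb b"
proof -
  obtain a b d where gg: "g = (a,b,d)" by (cases g) auto
  have h: "a \<in> A" "b \<in> carrier B" "d < q" using g gg by (auto simp: in_G)
  have c: "a \<in> carrier B" using h A_car by auto
  show ?thesis
  proof (cases "q = 1")
    case True
    then have "d = 0" using h by simp
    moreover have "a = \<one>\<^bsub>B\<^esub>" using m_kill[OF h(1)] True c by simp
    ultimately show ?thesis using h gg by (auto simp: emb_def)
  next
    case False
    then have q1: "1 < q" using q_pos by simp
    have "(\<one>\<^bsub>B\<^esub>, \<one>\<^bsub>B\<^esub>, 1) \<in> carrier G" using q1 A_one by (simp add: in_G)
    then have "g \<otimes>\<^bsub>G\<^esub> (\<one>\<^bsub>B\<^esub>, \<one>\<^bsub>B\<^esub>, 1) = (\<one>\<^bsub>B\<^esub>, \<one>\<^bsub>B\<^esub>, 1) \<otimes>\<^bsub>G\<^esub> g" using cen by blast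
    then have "b = a \<otimes>\<^bsub>B\<^esub> b" using h c by (simp add: gg mult_G)
    then have a1: "a = \<one>\<^bsub>B\<^esub>" using h c by (metis B.l_one B.r_cancel_one')
    have "\<forall>x\<in>A. x [^]\<^bsub>B\<^esub> d = \<one>\<^bsub>B\<^esub>"
    proof
      fix x assume x: "x \<in> A"
      have "(x, \<one>\<^bsub>B\<^esub>, 0) \<in> carrier G" using x q_pos by (simp add: in_G)
      then have "g \<otimes>\<^bsub>G\<^esub> (x, \<one>\<^bsub>B\<^esub>, 0) = (x, \<one>\<^bsub>B\<^esub>, 0) \<otimes>\<^bsub>G\<^esub> g" using cen by blast
      then have "b \<otimes>\<^bsub>B\<^esub> x [^]\<^bsub>B\<^esub> d = b" using h c x A_car a1 by (simp add: gg mult_G)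
      then show "x [^]\<^bsub>B\<^esub> d = \<one>\<^bsub>B\<^esub>" using h x A_car by simp
    qed
    then have "d = 0" using exp_zero h by blast
    then show ?thesis using a1 h gg by (auto simp: emb_def)
  qed
qed

lemma Cs_witness:
  assumes "c \<in> A" shows "\<exists>u\<in>carrier G. \<exists>v\<in>carrier G. v \<otimes>\<^bsub>G\<^esub> u = u \<otimes>\<^bsub>G\<^esub> v \<otimes>\<^bsub>G\<^esub> emb c"
proof (cases "q = 1")
  case True
  have "c = \<one>\<^bsub>B\<^esub>" using m_kill[OF assms] True A_car[OF assms] by simp
  then show ?thesis using emb_one by (intro bexI[of _ "\<one>\<^bsub>G\<^esub>"]) auto
next
  case False
  then have q1: "1 < q" using q_pos by simp
  have c: "c \<in> carrier B" using A_car assms .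
  have "(\<one>\<^bsub>B\<^esub>, \<one>\<^bsub>B\<^esub>, 1) \<in> carrier G" "(c, \<one>\<^bsub>B\<^esub>, 0) \<in> carrier G"
    using q1 A_one assms by (auto simp: in_G)
  moreover have "(\<one>\<^bsub>B\<^esub>, \<one>\<^bsub>B\<^esub>, 1) \<otimes>\<^bsub>G\<^esub> (c, \<one>\<^bsub>B\<^esub>, 0) =
     (c, \<one>\<^bsub>B\<^esub>, 0) \<otimes>\<^bsub>G\<^esub> (\<one>\<^bsub>B\<^esub>, \<one>\<^bsub>B\<^esub>, 1) \<otimes>\<^bsub>G\<^esub> emb c"
    using c q1 by (simp add: mult_G emb_def)
  ultimately show ?thesis by blast
qed

lemma Cs_char:
  assumes "u \<in> carrier G" "v \<in> carrier G" "z \<in> carrier G" "v \<otimes>\<^bsub>G\<^esub> u = u \<otimes>\<^bsub>G\<^esub> v \<otimes>\<^bsub>G\<^esub> z"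
  shows "\<exists>c\<in>A. z = emb c"
proof -
  obtain c where c: "c \<in> A" "v \<otimes>\<^bsub>G\<^esub> u = u \<otimes>\<^bsub>G\<^esub> v \<otimes>\<^bsub>G\<^esub> emb c" using comm_defect assms by blast
  have "emb c \<in> carrier G" using c A_car emb_car by auto
  then have "z = emb c" using lcan[of "u \<otimes>\<^bsub>G\<^esub> v" z "emb c"] assms c by auto
  then show ?thesis using c by blast
qed


lemma emb_inv: "b \<in> carrier B \<Longrightarrow> emb (inv\<^bsub>B\<^esub> b) = inv\<^bsub>G\<^esub> (emb b)"
  by (rule G.inv_equality[symmetric]) (auto simp: emb_mult emb_car emb_one)

lemma sub_pre: assumes "subgroup S G" shows "subgroup {b \<in> carrier B. emb b \<in> S} B"
proof (rule B.subgroupI)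
  show "{b \<in> carrier B. emb b \<in> S} \<noteq> {}" using emb_one assms subgroup.one_closed by fastforce
  show "inv\<^bsub>B\<^esub> a \<in> {b \<in> carrier B. emb b \<in> S}" if "a \<in> {b \<in> carrier B. emb b \<in> S}" for a
    using that emb_inv assms subgroup.m_inv_closed by fastforce
  show "a \<otimes>\<^bsub>B\<^esub> b \<in> {b \<in> carrier B. emb b \<in> S}"
    if "a \<in> {b \<in> carrier B. emb b \<in> S}" "b \<in> {b \<in> carrier B. emb b \<in> S}" for a b
    using that emb_mult[of a b, symmetric] assms subgroup.m_closed by fastforce
qed auto

lemma emb_factor:
  assumes UW: "U \<subseteq> carrier G" "W \<subseteq> carrier G"
    and comm: "\<forall>x\<in>U. \<forall>y\<in>W. x \<otimes>\<^bsub>G\<^esub> y = y \<otimes>\<^bsub>G\<^esub> x"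
    and dec: "\<forall>g\<in>carrier G. \<exists>x\<in>U. \<exists>y\<in>W. g = x \<otimes>\<^bsub>G\<^esub> y"
    and x: "x \<in> U" and y: "y \<in> W" and b: "b \<in> carrier B" and e: "emb b = x \<otimes>\<^bsub>G\<^esub> y"
  shows "\<exists>b1\<in>carrier B. x = emb b1"
proof -
  have "\<forall>g\<in>carrier G. x \<otimes>\<^bsub>G\<^esub> g = g \<otimes>\<^bsub>G\<^esub> x"
  proof -
    have "\<forall>g\<in>carrier G. (x \<otimes>\<^bsub>G\<^esub> y) \<otimes>\<^bsub>G\<^esub> g = g \<otimes>\<^bsub>G\<^esub> (x \<otimes>\<^bsub>G\<^esub> y)"
    proof
      fix g assume g: "g \<in> carrier G"
      show "(x \<otimes>\<^bsub>G\<^esub> y) \<otimes>\<^bsub>G\<^esub> g = g \<otimes>\<^bsub>G\<^esub> (x \<otimes>\<^bsub>G\<^esub> y)"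
        using emb_central[OF b g] unfolding e .
    qed
    then show ?thesis by (rule G.central_factor[OF UW comm dec x y])
  qed
  moreover have "x \<in> carrier G" using x UW by blast
  ultimately show ?thesis using center_char by blast
qed

lemma nontriv_part:
  assumes U: "subgroup U G" and W: "W \<subseteq> carrier G"
    and comm: "\<forall>x\<in>U. \<forall>y\<in>W. x \<otimes>\<^bsub>G\<^esub> y = y \<otimes>\<^bsub>G\<^esub> x"
    and dec: "\<forall>g\<in>carrier G. \<exists>x\<in>U. \<exists>y\<in>W. g = x \<otimes>\<^bsub>G\<^esub> y"
    and Unt: "U \<noteq> {\<one>\<^bsub>G\<^esub>}"
  shows "\<exists>b\<in>carrier B. b \<noteq> \<one>\<^bsub>B\<^esub> \<and> emb b \<in> U"
proof (rule ccontr)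
  assume na: "\<not> ?thesis"
  interpret U: subgroup U G by (rule U)
  have Uc: "U \<subseteq> carrier G" by (rule U.subset)
  have xcomm: "x1 \<otimes>\<^bsub>G\<^esub> x2 = x2 \<otimes>\<^bsub>G\<^esub> x1" if "x1 \<in> U" "x2 \<in> U" for x1 x2
  proof -
    have xc: "x1 \<in> carrier G" "x2 \<in> carrier G" using that Uc by auto
    obtain c where c: "c \<in> A" "x2 \<otimes>\<^bsub>G\<^esub> x1 = x1 \<otimes>\<^bsub>G\<^esub> x2 \<otimes>\<^bsub>G\<^esub> emb c"
      using comm_defect xc by blast
    have cc: "c \<in> carrier B" using A_car c by auto
    have "emb c = inv\<^bsub>G\<^esub> (x1 \<otimes>\<^bsub>G\<^esub> x2) \<otimes>\<^bsub>G\<^esub> (x2 \<otimes>\<^bsub>G\<^esub> x1)"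
      using c xc emb_car[OF cc] by (simp add: G.inv_solve_left)
    also have "\<dots> \<in> U" using that by (simp add: U.m_closed U.m_inv_closed)
    finally have "c = \<one>\<^bsub>B\<^esub>" using na cc by blast
    then show ?thesis using c xc by (simp add: emb_one)
  qed
  have "x = \<one>\<^bsub>G\<^esub>" if x: "x \<in> U" for x
  proof -
    have xc: "x \<in> carrier G" using x Uc by auto
    have "\<forall>g\<in>carrier G. x \<otimes>\<^bsub>G\<^esub> g = g \<otimes>\<^bsub>G\<^esub> x"
    proof
      fix g assume g: "g \<in> carrier G"
      obtain x' y' where x': "x' \<in> U" and y': "y' \<in> W" and gg: "g = x' \<otimes>\<^bsub>G\<^esub> y'" using dec g by blast
      have c: "x' \<in> carrier G" "y' \<in> carrier G" using x' y' Uc W by auto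
      have xy': "x \<otimes>\<^bsub>G\<^esub> y' = y' \<otimes>\<^bsub>G\<^esub> x" using comm[rule_format, OF x y'] .
      have "x \<otimes>\<^bsub>G\<^esub> g = x' \<otimes>\<^bsub>G\<^esub> x \<otimes>\<^bsub>G\<^esub> y'" using xcomm[OF x x'] c xc by (simp add: gg G.m_assoc[symmetric])
      also have "\<dots> = x' \<otimes>\<^bsub>G\<^esub> (y' \<otimes>\<^bsub>G\<^esub> x)" using c xc xy' by (simp add: G.m_assoc)
      also have "\<dots> = g \<otimes>\<^bsub>G\<^esub> x" using c xc by (simp add: gg G.m_assoc)
      finally show "x \<otimes>\<^bsub>G\<^esub> g = g \<otimes>\<^bsub>G\<^esub> x" .
    qed
    then obtain b where b: "b \<in> carrier B" "x = emb b" using center_char[OF xc] by blast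
    then have "b = \<one>\<^bsub>B\<^esub>" using na x by blast
    then show ?thesis using b emb_one by simp
  qed
  then have "U = {\<one>\<^bsub>G\<^esub>}" using U.one_closed by blast
  then show False using Unt by simp
qed


lemma A_split:
  assumes H: "subgroup H G" and K: "subgroup K G"
    and comm: "\<forall>h\<in>H. \<forall>k\<in>K. h \<otimes>\<^bsub>G\<^esub> k = k \<otimes>\<^bsub>G\<^esub> h"
    and dec: "\<forall>g\<in>carrier G. \<exists>h\<in>H. \<exists>k\<in>K. g = h \<otimes>\<^bsub>G\<^esub> k"
    and a: "a \<in> A"
  shows "\<exists>c1\<in>A. \<exists>c2\<in>A. emb c1 \<in> H \<and> emb c2 \<in> K \<and> a = c1 \<otimes>\<^bsub>B\<^esub> c2"
proof -
  interpret H: subgroup H G by (rule H)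
  interpret K: subgroup K G by (rule K)
  obtain u v where uv: "u \<in> carrier G" "v \<in> carrier G" and e: "v \<otimes>\<^bsub>G\<^esub> u = u \<otimes>\<^bsub>G\<^esub> v \<otimes>\<^bsub>G\<^esub> emb a"
    using Cs_witness[OF a] by blast
  obtain h1 k1 where hk1: "h1 \<in> H" "k1 \<in> K" "u = h1 \<otimes>\<^bsub>G\<^esub> k1" using dec uv by blast
  obtain h2 k2 where hk2: "h2 \<in> H" "k2 \<in> K" "v = h2 \<otimes>\<^bsub>G\<^esub> k2" using dec uv by blast
  have c: "h1 \<in> carrier G" "k1 \<in> carrier G" "h2 \<in> carrier G" "k2 \<in> carrier G"
    using hk1 hk2 H.subset K.subset by auto
  obtain c1 where c1: "c1 \<in> A" "h2 \<otimes>\<^bsub>G\<^esub> h1 = h1 \<otimes>\<^bsub>G\<^esub> h2 \<otimes>\<^bsub>G\<^esub> emb c1"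
    using comm_defect c by blast
  obtain c2 where c2: "c2 \<in> A" "k2 \<otimes>\<^bsub>G\<^esub> k1 = k1 \<otimes>\<^bsub>G\<^esub> k2 \<otimes>\<^bsub>G\<^esub> emb c2"
    using comm_defect c by blast
  have cc: "c1 \<in> carrier B" "c2 \<in> carrier B" "a \<in> carrier B" using c1 c2 a A_car by auto
  have ec: "emb c1 \<in> carrier G" "emb c2 \<in> carrier G" "emb a \<in> carrier G" using cc emb_car by auto
  have "emb c1 = inv\<^bsub>G\<^esub> (h1 \<otimes>\<^bsub>G\<^esub> h2) \<otimes>\<^bsub>G\<^esub> (h2 \<otimes>\<^bsub>G\<^esub> h1)"
    using c1 c ec by (simp add: G.inv_solve_left)
  also have "\<dots> \<in> H" using hk1 hk2 by (simp add: H.m_closed H.m_inv_closed)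
  finally have e1: "emb c1 \<in> H" .
  have "emb c2 = inv\<^bsub>G\<^esub> (k1 \<otimes>\<^bsub>G\<^esub> k2) \<otimes>\<^bsub>G\<^esub> (k2 \<otimes>\<^bsub>G\<^esub> k1)"
    using c2 c ec by (simp add: G.inv_solve_left)
  also have "\<dots> \<in> K" using hk1 hk2 by (simp add: K.m_closed K.m_inv_closed)
  finally have e2: "emb c2 \<in> K" .
  have uv': "u \<otimes>\<^bsub>G\<^esub> v = h1 \<otimes>\<^bsub>G\<^esub> h2 \<otimes>\<^bsub>G\<^esub> (k1 \<otimes>\<^bsub>G\<^esub> k2)"
  proof -
    have "k1 \<otimes>\<^bsub>G\<^esub> h2 = h2 \<otimes>\<^bsub>G\<^esub> k1" using comm[rule_format, OF hk2(1) hk1(2), symmetric] .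
    then have "h1 \<otimes>\<^bsub>G\<^esub> k1 \<otimes>\<^bsub>G\<^esub> (h2 \<otimes>\<^bsub>G\<^esub> k2) = h1 \<otimes>\<^bsub>G\<^esub> h2 \<otimes>\<^bsub>G\<^esub> (k1 \<otimes>\<^bsub>G\<^esub> k2)"
      using c by (intro G.swap_mid) auto
    then show ?thesis using hk1 hk2 by simp
  qed
  have "v \<otimes>\<^bsub>G\<^esub> u = h2 \<otimes>\<^bsub>G\<^esub> k2 \<otimes>\<^bsub>G\<^esub> (h1 \<otimes>\<^bsub>G\<^esub> k1)" using hk1 hk2 by simp
  also have "\<dots> = h2 \<otimes>\<^bsub>G\<^esub> h1 \<otimes>\<^bsub>G\<^esub> (k2 \<otimes>\<^bsub>G\<^esub> k1)"
    using c comm[rule_format, OF hk1(1) hk2(2), symmetric] by (intro G.swap_mid) auto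
  also have "\<dots> = h1 \<otimes>\<^bsub>G\<^esub> h2 \<otimes>\<^bsub>G\<^esub> emb c1 \<otimes>\<^bsub>G\<^esub> (k1 \<otimes>\<^bsub>G\<^esub> k2 \<otimes>\<^bsub>G\<^esub> emb c2)"
    by (simp only: c1(2) c2(2))
  also have "\<dots> = h1 \<otimes>\<^bsub>G\<^esub> h2 \<otimes>\<^bsub>G\<^esub> (k1 \<otimes>\<^bsub>G\<^esub> k2) \<otimes>\<^bsub>G\<^esub> (emb c1 \<otimes>\<^bsub>G\<^esub> emb c2)"
    using c ec emb_central[OF cc(1), of "k1 \<otimes>\<^bsub>G\<^esub> k2"] by (intro G.swap_mid) auto
  also have "\<dots> = u \<otimes>\<^bsub>G\<^esub> v \<otimes>\<^bsub>G\<^esub> emb (c1 \<otimes>\<^bsub>B\<^esub> c2)"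
    by (simp only: uv' emb_mult[OF cc(1,2)])
  finally have "u \<otimes>\<^bsub>G\<^esub> v \<otimes>\<^bsub>G\<^esub> emb a = u \<otimes>\<^bsub>G\<^esub> v \<otimes>\<^bsub>G\<^esub> emb (c1 \<otimes>\<^bsub>B\<^esub> c2)"
    using e by simp
  moreover have "u \<otimes>\<^bsub>G\<^esub> v \<in> carrier G" using uv by simp
  moreover have "emb (c1 \<otimes>\<^bsub>B\<^esub> c2) \<in> carrier G" using cc by (simp add: emb_car)
  ultimately have "emb a = emb (c1 \<otimes>\<^bsub>B\<^esub> c2)" using lcan ec(3) by blast
  then have "a = c1 \<otimes>\<^bsub>B\<^esub> c2" by (rule emb_inj)
  then show ?thesis using c1 c2 e1 e2 by blast
qed

lemma sub_obj: assumes S: "subgroup S B" shows "S_obj p n (A \<inter> S) (B\<lparr>carrier := S\<rparr>)"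
proof -
  have Sc: "S \<subseteq> carrier B" using S subgroup.subset by blast
  have g: "group (B\<lparr>carrier := S\<rparr>)" using B.subgroup_imp_group[OF S] .
  have "comm_group (B\<lparr>carrier := S\<rparr>)"
    by (rule group.group_comm_groupI[OF g]) (use Sc in \<open>auto intro: B.m_comm\<close>)
  moreover have "finite (carrier (B\<lparr>carrier := S\<rparr>))" using finite_subset[OF Sc finB] by simp
  moreover have "\<forall>x\<in>carrier (B\<lparr>carrier := S\<rparr>). x [^]\<^bsub>B\<lparr>carrier := S\<rparr>\<^esub> (p ^ n) = \<one>\<^bsub>B\<lparr>carrier := S\<rparr>\<^esub>"
  proof
    fix x assume "x \<in> carrier (B\<lparr>carrier := S\<rparr>)"
    then have "x \<in> carrier B" using Sc by auto
    moreover have "x [^]\<^bsub>B\<lparr>carrier := S\<rparr>\<^esub> (p ^ n) = x [^]\<^bsub>B\<^esub> (p ^ n)" by (simp add: nat_pow_def)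
    ultimately show "x [^]\<^bsub>B\<lparr>carrier := S\<rparr>\<^esub> (p ^ n) = \<one>\<^bsub>B\<lparr>carrier := S\<rparr>\<^esub>" using exp_n by simp
  qed
  moreover have "subgroup (A \<inter> S) (B\<lparr>carrier := S\<rparr>)"
    using B.subgroup_incl[OF subgroup_Int[OF Asub S] S] by blast
  ultimately show ?thesis unfolding S_obj_def by blast
qed

lemma dsum_iso:
  assumes S1: "subgroup B1 B" and S2: "subgroup B2 B" and int: "B1 \<inter> B2 \<subseteq> {\<one>\<^bsub>B\<^esub>}"
    and split: "\<forall>b\<in>carrier B. \<exists>x\<in>B1. \<exists>y\<in>B2. b = x \<otimes>\<^bsub>B\<^esub> y"
    and Asplit: "\<forall>a\<in>A. \<exists>x\<in>A \<inter> B1. \<exists>y\<in>A \<inter> B2. a = x \<otimes>\<^bsub>B\<^esub> y"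
  shows "S_iso A B ((A \<inter> B1) \<times> (A \<inter> B2)) (B\<lparr>carrier := B1\<rparr> \<times>\<times> B\<lparr>carrier := B2\<rparr>)"
proof -
  interpret S1: subgroup B1 B by (rule S1)
  interpret S2: subgroup B2 B by (rule S2)
  have uniq: "x = x' \<and> y = y'" if "x \<in> B1" "x' \<in> B1" "y \<in> B2" "y' \<in> B2" "x \<otimes>\<^bsub>B\<^esub> y = x' \<otimes>\<^bsub>B\<^esub> y'" for x x' y y'
  proof -
    have c: "x \<in> carrier B" "x' \<in> carrier B" "y \<in> carrier B" "y' \<in> carrier B" using that by auto
    have "inv\<^bsub>B\<^esub> x' \<otimes>\<^bsub>B\<^esub> x = inv\<^bsub>B\<^esub> x' \<otimes>\<^bsub>B\<^esub> (x \<otimes>\<^bsub>B\<^esub> y) \<otimes>\<^bsub>B\<^esub> inv\<^bsub>B\<^esub> y"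
      using c by (simp add: B.m_assoc)
    also have "\<dots> = inv\<^bsub>B\<^esub> x' \<otimes>\<^bsub>B\<^esub> (x' \<otimes>\<^bsub>B\<^esub> y') \<otimes>\<^bsub>B\<^esub> inv\<^bsub>B\<^esub> y" using that by simp
    also have "\<dots> = y' \<otimes>\<^bsub>B\<^esub> inv\<^bsub>B\<^esub> y" using c by (simp add: B.m_assoc[symmetric])
    finally have t: "inv\<^bsub>B\<^esub> x' \<otimes>\<^bsub>B\<^esub> x = y' \<otimes>\<^bsub>B\<^esub> inv\<^bsub>B\<^esub> y" .
    have "inv\<^bsub>B\<^esub> x' \<otimes>\<^bsub>B\<^esub> x \<in> B1" using that by simp
    moreover have "inv\<^bsub>B\<^esub> x' \<otimes>\<^bsub>B\<^esub> x \<in> B2" unfolding t using that by simp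
    ultimately have "inv\<^bsub>B\<^esub> x' \<otimes>\<^bsub>B\<^esub> x = \<one>\<^bsub>B\<^esub>" using int by blast
    then have xx: "x = x'" using c by (simp add: B.inv_solve_left')
    then have "x \<otimes>\<^bsub>B\<^esub> y = x \<otimes>\<^bsub>B\<^esub> y'" using that(5) by simp
    then have "y = y'" by (rule B.grp_lcan[OF c(1) c(3) c(4)])
    then show ?thesis using xx by simp
  qed
  define P where "P b xy \<longleftrightarrow> fst xy \<in> B1 \<and> snd xy \<in> B2 \<and> b = fst xy \<otimes>\<^bsub>B\<^esub> snd xy" for b xy
  define f where "f b = (SOME xy. P b xy)" for b
  define g where "g xy = fst xy \<otimes>\<^bsub>B\<^esub> snd xy" for xy :: "'a \<times> 'a"
  have fprop0: "P b (f b)" if "b \<in> carrier B" for b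
  proof -
    have ex: "\<exists>xy. P b xy"
    proof -
      have "\<exists>x\<in>B1. \<exists>y\<in>B2. b = x \<otimes>\<^bsub>B\<^esub> y" using split that by (rule bspec)
      then obtain x where x: "x \<in> B1" and ey: "\<exists>y\<in>B2. b = x \<otimes>\<^bsub>B\<^esub> y" by (rule bexE)
      from ey obtain y where y: "y \<in> B2" and e: "b = x \<otimes>\<^bsub>B\<^esub> y" by (rule bexE)
      have "P b (x, y)" unfolding P_def using x y e by simp
      then show ?thesis by (rule exI)
    qed
    have "P b (SOME xy. P b xy)" using ex by (rule someI_ex)
    then show ?thesis by (simp add: f_def)
  qed
  have fp1: "fst (f b) \<in> B1" if "b \<in> carrier B" for b using fprop0[OF that] unfolding P_def by (rule conjunct1)
  have fp2: "snd (f b) \<in> B2" if "b \<in> carrier B" for b using fprop0[OF that] unfolding P_def by (rule conjunct1[OF conjunct2])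
  have fp3: "fst (f b) \<otimes>\<^bsub>B\<^esub> snd (f b) = b" if "b \<in> carrier B" for b
    using fprop0[OF that] unfolding P_def by (rule sym[OF conjunct2[OF conjunct2]])
  have fuq: "f (x \<otimes>\<^bsub>B\<^esub> y) = (x, y)" if "x \<in> B1" "y \<in> B2" for x y
  proof -
    have xyc: "x \<otimes>\<^bsub>B\<^esub> y \<in> carrier B" using that by auto
    have fp: "fst (f (x \<otimes>\<^bsub>B\<^esub> y)) \<in> B1" "snd (f (x \<otimes>\<^bsub>B\<^esub> y)) \<in> B2"
      "x \<otimes>\<^bsub>B\<^esub> y = fst (f (x \<otimes>\<^bsub>B\<^esub> y)) \<otimes>\<^bsub>B\<^esub> snd (f (x \<otimes>\<^bsub>B\<^esub> y))"
      using fp1[OF xyc] fp2[OF xyc] fp3[OF xyc] by auto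
    have "x = fst (f (x \<otimes>\<^bsub>B\<^esub> y)) \<and> y = snd (f (x \<otimes>\<^bsub>B\<^esub> y))"
      by (rule uniq[OF that(1) fp(1) that(2) fp(2) fp(3)])
    then have "fst (f (x \<otimes>\<^bsub>B\<^esub> y)) = x \<and> snd (f (x \<otimes>\<^bsub>B\<^esub> y)) = y" by simp
    then show ?thesis by (simp add: prod_eq_iff)
  qed
  have fB: "f b = (fst (f b), snd (f b))" for b by simp
  have i1: "f \<in> hom B (B\<lparr>carrier := B1\<rparr> \<times>\<times> B\<lparr>carrier := B2\<rparr>)"
  proof (rule homI)
    show "f x \<in> carrier (B\<lparr>carrier := B1\<rparr> \<times>\<times> B\<lparr>carrier := B2\<rparr>)" if "x \<in> carrier B" for x
      using fp1[OF that] fp2[OF that] by (simp add: mem_Times_iff)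
    show "f (x \<otimes>\<^bsub>B\<^esub> y) = f x \<otimes>\<^bsub>B\<lparr>carrier := B1\<rparr> \<times>\<times> B\<lparr>carrier := B2\<rparr>\<^esub> f y"
      if "x \<in> carrier B" "y \<in> carrier B" for x y
    proof -
      obtain x1 x2 where x: "f x = (x1, x2)" by (cases "f x")
      obtain y1 y2 where y: "f y = (y1, y2)" by (cases "f y")
      have h: "x1 \<in> B1" "x2 \<in> B2" "x = x1 \<otimes>\<^bsub>B\<^esub> x2" "y1 \<in> B1" "y2 \<in> B2" "y = y1 \<otimes>\<^bsub>B\<^esub> y2"
        using fp1[OF that(1)] fp2[OF that(1)] fp3[OF that(1)] fp1[OF that(2)] fp2[OF that(2)] fp3[OF that(2)]
        unfolding x y by auto
      have c: "x1 \<in> carrier B" "x2 \<in> carrier B" "y1 \<in> carrier B" "y2 \<in> carrier B" using h by auto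
      have "x \<otimes>\<^bsub>B\<^esub> y = (x1 \<otimes>\<^bsub>B\<^esub> y1) \<otimes>\<^bsub>B\<^esub> (x2 \<otimes>\<^bsub>B\<^esub> y2)"
        using c h by (simp add: B.m_ac)
      then have "f (x \<otimes>\<^bsub>B\<^esub> y) = (x1 \<otimes>\<^bsub>B\<^esub> y1, x2 \<otimes>\<^bsub>B\<^esub> y2)" using fuq h by simp
      then show ?thesis using x y by simp
    qed
  qed
  have i2: "f ` A \<subseteq> (A \<inter> B1) \<times> (A \<inter> B2)"
  proof
    fix z assume "z \<in> f ` A"
    then obtain a where a: "a \<in> A" "z = f a" by blast
    then obtain x y where "x \<in> A \<inter> B1" "y \<in> A \<inter> B2" "a = x \<otimes>\<^bsub>B\<^esub> y" using Asplit by blast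
    then show "z \<in> (A \<inter> B1) \<times> (A \<inter> B2)" using a fuq by simp
  qed
  have i3: "g \<in> hom (B\<lparr>carrier := B1\<rparr> \<times>\<times> B\<lparr>carrier := B2\<rparr>) B"
  proof (rule homI)
    show "g x \<in> carrier B" if "x \<in> carrier (B\<lparr>carrier := B1\<rparr> \<times>\<times> B\<lparr>carrier := B2\<rparr>)" for x
      using that by (auto simp: g_def mem_Times_iff)
    show "g (x \<otimes>\<^bsub>B\<lparr>carrier := B1\<rparr> \<times>\<times> B\<lparr>carrier := B2\<rparr>\<^esub> y) = g x \<otimes>\<^bsub>B\<^esub> g y"
      if "x \<in> carrier (B\<lparr>carrier := B1\<rparr> \<times>\<times> B\<lparr>carrier := B2\<rparr>)" "y \<in> carrier (B\<lparr>carrier := B1\<rparr> \<times>\<times> B\<lparr>carrier := B2\<rparr>)" for x y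
    proof -
      have c: "fst x \<in> carrier B" "snd x \<in> carrier B" "fst y \<in> carrier B" "snd y \<in> carrier B"
        using that by (auto simp: mem_Times_iff)
      then show ?thesis by (simp add: g_def mult_DirProd' B.m_ac)
    qed
  qed
  have i4: "g ` ((A \<inter> B1) \<times> (A \<inter> B2)) \<subseteq> A" by (auto simp: g_def A_closed)
  have i5: "\<forall>x\<in>carrier B. g (f x) = x" using fp3 by (simp add: g_def)
  have i6: "\<forall>y\<in>carrier (B\<lparr>carrier := B1\<rparr> \<times>\<times> B\<lparr>carrier := B2\<rparr>). f (g y) = y"
    by (auto simp: g_def fuq)
  show ?thesis unfolding S_iso_def S_hom_def
    by (rule exI[of _ f], rule exI[of _ g]) (intro conjI i1 i2 i3 i4 i5 i6)
qed


lemma decomp: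
  assumes H: "H \<lhd> G" and K: "K \<lhd> G" and HK1: "H \<inter> K = {\<one>\<^bsub>G\<^esub>}"
    and HKG: "H <#>\<^bsub>G\<^esub> K = carrier G" and Hn: "H \<noteq> {\<one>\<^bsub>G\<^esub>}" and Kn: "K \<noteq> {\<one>\<^bsub>G\<^esub>}"
  shows "\<exists>(A1::'a set) (B1::'a monoid) (A2::'a set) (B2::'a monoid).
          S_obj p n A1 B1 \<and> S_obj p n A2 B2 \<and> S_nonzero B1 \<and> S_nonzero B2 \<and>
          S_iso A B (A1 \<times> A2) (B1 \<times>\<times> B2)"
proof -
  have Hs: "subgroup H G" using H by (rule normal_imp_subgroup)
  have Ks: "subgroup K G" using K by (rule normal_imp_subgroup)
  have Hc: "H \<subseteq> carrier G" using Hs by (rule subgroup.subset)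
  have Kc: "K \<subseteq> carrier G" using Ks by (rule subgroup.subset)
  have comm: "\<forall>h\<in>H. \<forall>k\<in>K. h \<otimes>\<^bsub>G\<^esub> k = k \<otimes>\<^bsub>G\<^esub> h"
    using G.normal_disjoint_comm[OF H K HK1] by blast
  have comm': "\<forall>k\<in>K. \<forall>h\<in>H. k \<otimes>\<^bsub>G\<^esub> h = h \<otimes>\<^bsub>G\<^esub> k"
  proof (intro ballI)
    fix k h assume "k \<in> K" "h \<in> H"
    show "k \<otimes>\<^bsub>G\<^esub> h = h \<otimes>\<^bsub>G\<^esub> k" using comm[rule_format, OF \<open>h \<in> H\<close> \<open>k \<in> K\<close>] by (rule sym)
  qed
  have dec: "\<forall>g\<in>carrier G. \<exists>h\<in>H. \<exists>k\<in>K. g = h \<otimes>\<^bsub>G\<^esub> k"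
    using G.set_mult_dec[OF HKG] by blast
  have dec': "\<forall>g\<in>carrier G. \<exists>k\<in>K. \<exists>h\<in>H. g = k \<otimes>\<^bsub>G\<^esub> h"
  proof
    fix g assume g: "g \<in> carrier G"
    have "\<exists>h\<in>H. \<exists>k\<in>K. g = h \<otimes>\<^bsub>G\<^esub> k" using dec g by (rule bspec)
    then obtain h where h: "h \<in> H" and ek: "\<exists>k\<in>K. g = h \<otimes>\<^bsub>G\<^esub> k" by (rule bexE)
    from ek obtain k where k: "k \<in> K" and e: "g = h \<otimes>\<^bsub>G\<^esub> k" by (rule bexE)
    have "g = k \<otimes>\<^bsub>G\<^esub> h" using e comm[rule_format, OF h k] by simp
    then show "\<exists>k\<in>K. \<exists>h\<in>H. g = k \<otimes>\<^bsub>G\<^esub> h" using h k by blast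
  qed
  define B1 where "B1 = {b \<in> carrier B. emb b \<in> H}"
  define B2 where "B2 = {b \<in> carrier B. emb b \<in> K}"
  have sB1: "subgroup B1 B" unfolding B1_def by (rule sub_pre[OF Hs])
  have sB2: "subgroup B2 B" unfolding B2_def by (rule sub_pre[OF Ks])
  have int: "B1 \<inter> B2 \<subseteq> {\<one>\<^bsub>B\<^esub>}"
  proof
    fix b assume b: "b \<in> B1 \<inter> B2"
    then have "emb b \<in> H \<inter> K" by (simp add: B1_def B2_def)
    then have "emb b = emb \<one>\<^bsub>B\<^esub>" using HK1 emb_one by simp
    then have "b = \<one>\<^bsub>B\<^esub>" by (rule emb_inj)
    then show "b \<in> {\<one>\<^bsub>B\<^esub>}" by simp
  qed
  have split: "\<forall>b\<in>carrier B. \<exists>x\<in>B1. \<exists>y\<in>B2. b = x \<otimes>\<^bsub>B\<^esub> y"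
  proof
    fix b assume b: "b \<in> carrier B"
    have ebc: "emb b \<in> carrier G" by (rule emb_car[OF b])
    have "\<exists>h\<in>H. \<exists>k\<in>K. emb b = h \<otimes>\<^bsub>G\<^esub> k" using dec ebc by (rule bspec)
    then obtain h where h: "h \<in> H" and ek: "\<exists>k\<in>K. emb b = h \<otimes>\<^bsub>G\<^esub> k" by (rule bexE)
    from ek obtain k where k: "k \<in> K" and e: "emb b = h \<otimes>\<^bsub>G\<^esub> k" by (rule bexE)
    obtain b1 where b1: "b1 \<in> carrier B" "h = emb b1"
      using emb_factor[OF Hc Kc comm dec h k b e] by blast
    have e': "emb b = k \<otimes>\<^bsub>G\<^esub> h" using e comm[rule_format, OF h k] by simp
    obtain b2 where b2: "b2 \<in> carrier B" "k = emb b2"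
      using emb_factor[OF Kc Hc comm' dec' k h b e'] by blast
    have "emb b = emb (b1 \<otimes>\<^bsub>B\<^esub> b2)" using e b1 b2 emb_mult by simp
    then have "b = b1 \<otimes>\<^bsub>B\<^esub> b2" by (rule emb_inj)
    moreover have "b1 \<in> B1" using b1 h by (simp add: B1_def)
    moreover have "b2 \<in> B2" using b2 k by (simp add: B2_def)
    ultimately show "\<exists>x\<in>B1. \<exists>y\<in>B2. b = x \<otimes>\<^bsub>B\<^esub> y" by blast
  qed
  have Asplit: "\<forall>a\<in>A. \<exists>x\<in>A \<inter> B1. \<exists>y\<in>A \<inter> B2. a = x \<otimes>\<^bsub>B\<^esub> y"
  proof
    fix a assume a: "a \<in> A"
    have "\<exists>c1\<in>A. \<exists>c2\<in>A. emb c1 \<in> H \<and> emb c2 \<in> K \<and> a = c1 \<otimes>\<^bsub>B\<^esub> c2"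
      by (rule A_split[OF Hs Ks comm dec a])
    then obtain c1 where c1: "c1 \<in> A" and ec2: "\<exists>c2\<in>A. emb c1 \<in> H \<and> emb c2 \<in> K \<and> a = c1 \<otimes>\<^bsub>B\<^esub> c2" by (rule bexE)
    from ec2 obtain c2 where c2: "c2 \<in> A" and r: "emb c1 \<in> H \<and> emb c2 \<in> K \<and> a = c1 \<otimes>\<^bsub>B\<^esub> c2" by (rule bexE)
    have "c1 \<in> A \<inter> B1" using c1 r A_car[OF c1] by (simp add: B1_def)
    moreover have "c2 \<in> A \<inter> B2" using c2 r A_car[OF c2] by (simp add: B2_def)
    moreover have "a = c1 \<otimes>\<^bsub>B\<^esub> c2" using r by simp
    ultimately show "\<exists>x\<in>A \<inter> B1. \<exists>y\<in>A \<inter> B2. a = x \<otimes>\<^bsub>B\<^esub> y" by blast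
  qed
  have nz1: "S_nonzero (B\<lparr>carrier := B1\<rparr>)"
  proof -
    obtain b where b: "b \<in> carrier B" "b \<noteq> \<one>\<^bsub>B\<^esub>" "emb b \<in> H"
      using nontriv_part[OF Hs Kc comm dec Hn] by blast
    then have "b \<in> B1" by (simp add: B1_def)
    then have "B1 \<noteq> {\<one>\<^bsub>B\<^esub>}" using b by blast
    then show ?thesis by (simp add: S_nonzero_def)
  qed
  have nz2: "S_nonzero (B\<lparr>carrier := B2\<rparr>)"
  proof -
    obtain b where b: "b \<in> carrier B" "b \<noteq> \<one>\<^bsub>B\<^esub>" "emb b \<in> K"
      using nontriv_part[OF Ks Hc comm' dec' Kn] by blast
    then have "b \<in> B2" by (simp add: B2_def)
    then have "B2 \<noteq> {\<one>\<^bsub>B\<^esub>}" using b by blast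
    then show ?thesis by (simp add: S_nonzero_def)
  qed
  have o1: "S_obj p n (A \<inter> B1) (B\<lparr>carrier := B1\<rparr>)" by (rule sub_obj[OF sB1])
  have o2: "S_obj p n (A \<inter> B2) (B\<lparr>carrier := B2\<rparr>)" by (rule sub_obj[OF sB2])
  have iso: "S_iso A B ((A \<inter> B1) \<times> (A \<inter> B2)) (B\<lparr>carrier := B1\<rparr> \<times>\<times> B\<lparr>carrier := B2\<rparr>)"
    by (rule dsum_iso[OF sB1 sB2 int split Asplit])
  show ?thesis
    by (rule exI[of _ "A \<inter> B1"], rule exI[of _ "B\<lparr>carrier := B1\<rparr>"],
        rule exI[of _ "A \<inter> B2"], rule exI[of _ "B\<lparr>carrier := B2\<rparr>"]) (intro conjI o1 o2 nz1 nz2 iso)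
qed

lemma indec: assumes "S_indecomposable p n A B" shows "group_indecomposable G"
proof -
  have nz: "carrier B \<noteq> {\<one>\<^bsub>B\<^esub>}" using assms by (simp add: S_indecomposable_def S_nonzero_def)
  obtain b where b: "b \<in> carrier B" "b \<noteq> \<one>\<^bsub>B\<^esub>" using nz B.one_closed by blast
  have "emb b \<in> carrier G" using b emb_car by blast
  moreover have "emb b \<noteq> \<one>\<^bsub>G\<^esub>" using b emb_one emb_inj by metis
  ultimately have c1: "carrier G \<noteq> {\<one>\<^bsub>G\<^esub>}" by blast
  have c2: "\<not> (\<exists>H K. H \<lhd> G \<and> K \<lhd> G \<and> H \<noteq> {\<one>\<^bsub>G\<^esub>} \<and> K \<noteq> {\<one>\<^bsub>G\<^esub>} \<and>
          H \<inter> K = {\<one>\<^bsub>G\<^esub>} \<and> H <#>\<^bsub>G\<^esub> K = carrier G)"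
  proof
    assume "\<exists>H K. H \<lhd> G \<and> K \<lhd> G \<and> H \<noteq> {\<one>\<^bsub>G\<^esub>} \<and> K \<noteq> {\<one>\<^bsub>G\<^esub>} \<and>
          H \<inter> K = {\<one>\<^bsub>G\<^esub>} \<and> H <#>\<^bsub>G\<^esub> K = carrier G"
    then obtain H K where hk: "H \<lhd> G" "K \<lhd> G" "H \<noteq> {\<one>\<^bsub>G\<^esub>}" "K \<noteq> {\<one>\<^bsub>G\<^esub>}"
          "H \<inter> K = {\<one>\<^bsub>G\<^esub>}" "H <#>\<^bsub>G\<^esub> K = carrier G" by blast
    have "\<exists>(A1::'a set) (B1::'a monoid) (A2::'a set) (B2::'a monoid).
          S_obj p n A1 B1 \<and> S_obj p n A2 B2 \<and> S_nonzero B1 \<and> S_nonzero B2 \<and>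
          S_iso A B (A1 \<times> A2) (B1 \<times>\<times> B2)"
      by (rule decomp[OF hk(1) hk(2) hk(5) hk(6) hk(3) hk(4)])
    then show False using assms unfolding S_indecomposable_def by blast
  qed
  show ?thesis unfolding group_indecomposable_def using c1 c2 by blast
qed


lemma iso_forward:
  assumes G2: "GS p n A' B'" and iso: "S_iso A B A' B'"
  shows "G \<cong> Gconstr p A' B'"
proof -
  interpret G2: GS p n A' B' by (rule G2)
  obtain f g where f: "S_hom A B A' B' f" and g: "S_hom A' B' A B g"
    and gf: "\<forall>x\<in>carrier B. g (f x) = x" and fg: "\<forall>y\<in>carrier B'. f (g y) = y"
    using iso unfolding S_iso_def by blast
  have fh: "f \<in> hom B B'" and fA: "f ` A \<subseteq> A'" using f by (auto simp: S_hom_def)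
  have gh: "g \<in> hom B' B" and gA: "g ` A' \<subseteq> A" using g by (auto simp: S_hom_def)
  have fA': "f a \<in> A'" if "a \<in> A" for a using fA that by blast
  have gA': "g a \<in> A" if "a \<in> A'" for a using gA that by blast
  have gB: "group B" by (rule B.is_group)
  have gB': "group B'" by (rule G2.B.is_group)
  have Ac: "A \<subseteq> carrier B" using A_car by blast
  have A'c: "A' \<subseteq> carrier B'" using G2.A_car by blast
  have fc: "f b \<in> carrier B'" if "b \<in> carrier B" for b using fh that by (auto simp: hom_def)
  have gc: "g b \<in> carrier B" if "b \<in> carrier B'" for b using gh that by (auto simp: hom_def)
  have eqk: "(\<forall>a\<in>A. a [^]\<^bsub>B\<^esub> (p ^ k) = \<one>\<^bsub>B\<^esub>) = (\<forall>a\<in>A'. a [^]\<^bsub>B'\<^esub> (p ^ k) = \<one>\<^bsub>B'\<^esub>)" for k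
    using kill_transfer[OF gB gB' gh fh fg gA A'c, of "p ^ k"] kill_transfer[OF gB' gB fh gh gf fA Ac, of "p ^ k"]
    by blast
  have "m = G2.m" unfolding m_def G2.m_def sub_exp_def using eqk by simp
  then have qq: "q = G2.q" by (simp add: q_def G2.q_def)
  define phi where "phi = (\<lambda>(a::'a, b::'a, d::nat). (f a, f b, d))"
  define psi where "psi = (\<lambda>(a::'b, b::'b, d::nat). (g a, g b, d))"
  have hom: "phi \<in> hom G G2.G"
  proof (rule homI)
    show "phi x \<in> carrier G2.G" if "x \<in> carrier G" for x
      using that fA' fc qq A_car by (cases x) (auto simp: phi_def in_G G2.in_G)
    show "phi (x \<otimes>\<^bsub>G\<^esub> y) = phi x \<otimes>\<^bsub>G2.G\<^esub> phi y" if "x \<in> carrier G" "y \<in> carrier G" for x y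
    proof -
      obtain a b d where x: "x = (a, b, d)" by (cases x)
      obtain a' b' d' where y: "y = (a', b', d')" by (cases y)
      have h: "a \<in> carrier B" "b \<in> carrier B" "a' \<in> carrier B" "b' \<in> carrier B"
        using that x y A_car by (auto simp: in_G)
      have "f (b \<otimes>\<^bsub>B\<^esub> a' [^]\<^bsub>B\<^esub> d \<otimes>\<^bsub>B\<^esub> b') = f b \<otimes>\<^bsub>B'\<^esub> (f a') [^]\<^bsub>B'\<^esub> d \<otimes>\<^bsub>B'\<^esub> f b'"
        using h by (simp add: hom_mult[OF fh] hom_nat_pow[OF fh _ gB gB'])
      moreover have "f (a \<otimes>\<^bsub>B\<^esub> a') = f a \<otimes>\<^bsub>B'\<^esub> f a'" using h by (simp add: hom_mult[OF fh])
      ultimately show ?thesis using x y qq by (simp add: phi_def mult_G G2.mult_G)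
    qed
  qed
  have "bij_betw phi (carrier G) (carrier G2.G)"
  proof (rule bij_betw_byWitness[of _ psi])
    show "\<forall>x\<in>carrier G. psi (phi x) = x"
      using gf A_car by (auto simp: phi_def psi_def in_G)
    show "\<forall>y\<in>carrier G2.G. phi (psi y) = y"
      using fg G2.A_car by (auto simp: phi_def psi_def G2.in_G)
    show "phi ` carrier G \<subseteq> carrier G2.G"
      using fA' fc qq A_car by (auto simp: phi_def in_G G2.in_G)
    show "psi ` carrier G2.G \<subseteq> carrier G"
      using gA' gc qq G2.A_car by (auto simp: psi_def in_G G2.in_G)
  qed
  then have "phi \<in> iso G G2.G" using hom by (simp add: iso_def)
  then show ?thesis unfolding G2.G_def by (rule is_isoI)
qed

lemma iso_backward_f:
  assumes G2: "GS p n A' B'" and phi: "phi \<in> iso G (Gconstr p A' B')"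
  shows "S_hom A B A' B' (\<lambda>b. fst (snd (phi (emb b))))"
    and "\<forall>b\<in>carrier B. phi (emb b) = (\<one>\<^bsub>B'\<^esub>, fst (snd (phi (emb b))), 0)"
proof -
  interpret G2: GS p n A' B' by (rule G2)
  have phiG: "phi \<in> iso G G2.G" using phi by (simp add: G2.G_def)
  have hom: "phi \<in> hom G G2.G" using phiG by (simp add: iso_def)
  have bij: "bij_betw phi (carrier G) (carrier G2.G)" using phiG by (simp add: iso_def)
  have surj: "phi ` carrier G = carrier G2.G" using bij by (rule bij_betw_imp_surj_on)
  have pc: "phi x \<in> carrier G2.G" if "x \<in> carrier G" for x using hom that by (auto simp: hom_def)
  have pm: "phi (x \<otimes>\<^bsub>G\<^esub> y) = phi x \<otimes>\<^bsub>G2.G\<^esub> phi y" if "x \<in> carrier G" "y \<in> carrier G" for x y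
    using hom that by (rule hom_mult)
  define f where "f b = fst (snd (phi (emb b)))" for b
  have femb: "phi (emb b) = G2.emb (f b) \<and> f b \<in> carrier B'" if b: "b \<in> carrier B" for b
  proof -
    have ec: "emb b \<in> carrier G" by (rule emb_car[OF b])
    have "\<forall>h'\<in>carrier G2.G. phi (emb b) \<otimes>\<^bsub>G2.G\<^esub> h' = h' \<otimes>\<^bsub>G2.G\<^esub> phi (emb b)"
    proof
      fix h' assume "h' \<in> carrier G2.G"
      then obtain h where h: "h \<in> carrier G" "h' = phi h" using surj by blast
      have "phi (emb b) \<otimes>\<^bsub>G2.G\<^esub> phi h = phi (emb b \<otimes>\<^bsub>G\<^esub> h)" using pm ec h by simp
      also have "\<dots> = phi (h \<otimes>\<^bsub>G\<^esub> emb b)" using emb_central[OF b h(1)] by simp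
      also have "\<dots> = phi h \<otimes>\<^bsub>G2.G\<^esub> phi (emb b)" using pm ec h by simp
      finally show "phi (emb b) \<otimes>\<^bsub>G2.G\<^esub> h' = h' \<otimes>\<^bsub>G2.G\<^esub> phi (emb b)" using h by simp
    qed
    then obtain b' where b': "b' \<in> carrier B'" "phi (emb b) = G2.emb b'"
      using G2.center_char[OF pc[OF ec]] by blast
    then have "f b = b'" by (simp add: f_def G2.emb_def)
    then show ?thesis using b' by simp
  qed
  have fh: "f \<in> hom B B'"
  proof (rule homI)
    show "f x \<in> carrier B'" if "x \<in> carrier B" for x using femb[OF that] by simp
    show "f (x \<otimes>\<^bsub>B\<^esub> y) = f x \<otimes>\<^bsub>B'\<^esub> f y" if "x \<in> carrier B" "y \<in> carrier B" for x y
    proof -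
      have xy: "x \<otimes>\<^bsub>B\<^esub> y \<in> carrier B" using that by simp
      have "G2.emb (f (x \<otimes>\<^bsub>B\<^esub> y)) = phi (emb (x \<otimes>\<^bsub>B\<^esub> y))" using femb[OF xy] by simp
      also have "\<dots> = phi (emb x \<otimes>\<^bsub>G\<^esub> emb y)" using that emb_mult by simp
      also have "\<dots> = phi (emb x) \<otimes>\<^bsub>G2.G\<^esub> phi (emb y)" using pm that emb_car by simp
      also have "\<dots> = G2.emb (f x) \<otimes>\<^bsub>G2.G\<^esub> G2.emb (f y)" using femb that by simp
      also have "\<dots> = G2.emb (f x \<otimes>\<^bsub>B'\<^esub> f y)" using femb that G2.emb_mult by simp
      finally show ?thesis by (rule G2.emb_inj)
    qed
  qed
  have fA: "f ` A \<subseteq> A'"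
  proof
    fix z assume "z \<in> f ` A"
    then obtain a where a: "a \<in> A" "z = f a" by blast
    have ac: "a \<in> carrier B" using A_car a by simp
    obtain u v where uv: "u \<in> carrier G" "v \<in> carrier G" and e: "v \<otimes>\<^bsub>G\<^esub> u = u \<otimes>\<^bsub>G\<^esub> v \<otimes>\<^bsub>G\<^esub> emb a"
      using Cs_witness[OF a(1)] by blast
    have ec: "emb a \<in> carrier G" using emb_car[OF ac] .
    have "phi v \<otimes>\<^bsub>G2.G\<^esub> phi u = phi u \<otimes>\<^bsub>G2.G\<^esub> phi v \<otimes>\<^bsub>G2.G\<^esub> phi (emb a)"
    proof -
      have "phi v \<otimes>\<^bsub>G2.G\<^esub> phi u = phi (v \<otimes>\<^bsub>G\<^esub> u)" using pm uv by simp
      also have "\<dots> = phi (u \<otimes>\<^bsub>G\<^esub> v \<otimes>\<^bsub>G\<^esub> emb a)" using e by simp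
      also have "\<dots> = phi (u \<otimes>\<^bsub>G\<^esub> v) \<otimes>\<^bsub>G2.G\<^esub> phi (emb a)" using pm uv ec by simp
      also have "\<dots> = phi u \<otimes>\<^bsub>G2.G\<^esub> phi v \<otimes>\<^bsub>G2.G\<^esub> phi (emb a)" using pm uv by simp
      finally show ?thesis .
    qed
    then obtain c where c: "c \<in> A'" "phi (emb a) = G2.emb c"
      using G2.Cs_char[OF pc[OF uv(1)] pc[OF uv(2)] pc[OF ec]] by blast
    then have "G2.emb (f a) = G2.emb c" using femb[OF ac] by simp
    then have "f a = c" by (rule G2.emb_inj)
    then show "z \<in> A'" using a c by simp
  qed
  show "S_hom A B A' B' (\<lambda>b. fst (snd (phi (emb b))))"
    using fh fA unfolding S_hom_def f_def by simp
  show "\<forall>b\<in>carrier B. phi (emb b) = (\<one>\<^bsub>B'\<^esub>, fst (snd (phi (emb b))), 0)"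
    using femb unfolding f_def G2.emb_def by simp
qed


lemma iso_backward:
  assumes G2: "GS p n A' B'" and iso: "G \<cong> Gconstr p A' B'"
  shows "S_iso A B A' B'"
proof -
  interpret G2: GS p n A' B' by (rule G2)
  obtain phi where phi: "phi \<in> iso G (Gconstr p A' B')" using iso unfolding is_iso_def by blast
  have phiG: "phi \<in> iso G G2.G" using phi by (simp add: G2.G_def)
  define psi where "psi = inv_into (carrier G) phi"
  have psiG: "psi \<in> iso G2.G G" unfolding psi_def by (rule G.iso_set_sym[OF phiG])
  have psi: "psi \<in> iso G2.G (Gconstr p A B)" using psiG by (simp add: G_def)
  have GSA: "GS p n A B" by (rule GS_axioms)
  have inj: "inj_on phi (carrier G)" using phiG by (simp add: iso_def bij_betw_def)
  have surj: "phi ` carrier G = carrier G2.G" using phiG by (simp add: iso_def bij_betw_def)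
  define f where "f = (\<lambda>b. fst (snd (phi (emb b))))"
  define g where "g = (\<lambda>b. fst (snd (psi (G2.emb b))))"
  have fS: "S_hom A B A' B' f" unfolding f_def by (rule iso_backward_f(1)[OF G2 phi])
  have gS: "S_hom A' B' A B g" unfolding g_def by (rule G2.iso_backward_f(1)[OF GSA psi])
  have fe: "phi (emb b) = G2.emb (f b)" if "b \<in> carrier B" for b
    using iso_backward_f(2)[OF G2 phi] that unfolding f_def G2.emb_def by blast
  have ge: "psi (G2.emb b) = emb (g b)" if "b \<in> carrier B'" for b
    using G2.iso_backward_f(2)[OF GSA psi] that unfolding g_def emb_def by blast
  have fc: "f b \<in> carrier B'" if "b \<in> carrier B" for b using fS that by (auto simp: S_hom_def hom_def)
  have gc: "g b \<in> carrier B" if "b \<in> carrier B'" for b using gS that by (auto simp: S_hom_def hom_def)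
  have gf: "\<forall>x\<in>carrier B. g (f x) = x"
  proof
    fix b assume b: "b \<in> carrier B"
    have "emb b = psi (phi (emb b))" unfolding psi_def using inv_into_f_f[OF inj emb_car[OF b]] by simp
    also have "\<dots> = psi (G2.emb (f b))" using fe[OF b] by simp
    also have "\<dots> = emb (g (f b))" using ge[OF fc[OF b]] .
    finally show "g (f b) = b" using emb_inj by metis
  qed
  have fg: "\<forall>y\<in>carrier B'. f (g y) = y"
  proof
    fix b assume b: "b \<in> carrier B'"
    have "G2.emb b \<in> phi ` carrier G" using surj G2.emb_car[OF b] by simp
    then have "G2.emb b = phi (psi (G2.emb b))" unfolding psi_def by (simp add: f_inv_into_f)
    also have "\<dots> = phi (emb (g b))" using ge[OF b] by simp
    also have "\<dots> = G2.emb (f (g b))" using fe[OF gc[OF b]] .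
    finally show "f (g b) = b" using G2.emb_inj by metis
  qed
  show ?thesis unfolding S_iso_def using fS gS gf fg by blast
qed

end

theorem lemma1:
  fixes p n :: nat
    and A :: "'a set" and B :: "'a monoid"
    and A' :: "'b set" and B' :: "'b monoid"
  assumes "Factorial_Ring.prime p"
  shows "(S_indecomposable p n A B \<longrightarrow> group_indecomposable (Gconstr p A B))
     \<and> (S_indecomposable p n A B \<and> S_indecomposable p n A' B' \<longrightarrow>
          (S_iso A B A' B' \<longleftrightarrow> Gconstr p A B \<cong> Gconstr p A' B'))"
proof (intro conjI impI)
  assume ind: "S_indecomposable p n A B"
  have gs: "GS p n A B" using ind assms by (simp add: GS_def S_indecomposable_def)
  show "group_indecomposable (Gconstr p A B)"
    using GS.indec[OF gs ind] GS.G_def[OF gs] by simp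
next
  assume ind: "S_indecomposable p n A B \<and> S_indecomposable p n A' B'"
  have gs: "GS p n A B" using ind assms by (simp add: GS_def S_indecomposable_def)
  have gs': "GS p n A' B'" using ind assms by (simp add: GS_def S_indecomposable_def)
  show "S_iso A B A' B' \<longleftrightarrow> Gconstr p A B \<cong> Gconstr p A' B'"
  proof
    assume "S_iso A B A' B'"
    then show "Gconstr p A B \<cong> Gconstr p A' B'"
      using GS.iso_forward[OF gs gs'] GS.G_def[OF gs] by simp
  next
    assume "Gconstr p A B \<cong> Gconstr p A' B'"
    then show "S_iso A B A' B'"
      using GS.iso_backward[OF gs gs'] GS.G_def[OF gs] by simp
  qed
qed

end
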